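(* For any attacker mixed strategy $\sigma_a$ (a probability distribution over subsets of $C$ of size at most $k_a$), the set function $g(S_d\mid\sigma_a)=\mathbb{E}_{S_a\sim\sigma_a}[f(\emptyset,S_a)-f(S_d,S_a)]$, defined on subsets $S_d\subseteq C$, is monotone and submodular.
   Context: Setting: voters $V$, channels $C$, edge probabilities $p_{uv},q_{uv}\in[0,1]$ (0 for non-edges), known preferences $\theta_v\in\{0,1\}$, and $f(S_d,S_a)=\sum_{v\in V}\theta_v\left(\prod_{u\in S_d}(1-q_{uv})\right)\left(1-\prod_{u\in S_a}(1-p_{uv})\right)$. A set function $h$ is monotone if $h(A\cup\{u\})\ge h(A)$ for all $A,u$, and submodular if $h(B\cup\{u\})-h(B)\le h(A\cup\{u\})-h(A)$ for all $A\subseteq B$ and $u\notin B$. *)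

theory Defs
  imports "HOL-Probability.Probability"
begin

text \<open>Expected number of (preference-1) voters influenced, as in the paper:
  f(S_d,S_a) = sum_v theta_v * prod_{u in S_d}(1 - q_uv) * (1 - prod_{u in S_a}(1 - p_uv)).\<close>
definition f_inf :: "'v set \<Rightarrow> ('c \<Rightarrow> 'v \<Rightarrow> real) \<Rightarrow> ('c \<Rightarrow> 'v \<Rightarrow> real) \<Rightarrow> ('v \<Rightarrow> real)
    \<Rightarrow> 'c set \<Rightarrow> 'c set \<Rightarrow> real" where
  "f_inf V p q \<theta> Sd Sa =
     (\<Sum>v\<in>V. \<theta> v * (\<Prod>u\<in>Sd. 1 - q u v) * (1 - (\<Prod>u\<in>Sa. 1 - p u v)))"

definition g_def_fun :: "'v set \<Rightarrow> ('c \<Rightarrow> 'v \<Rightarrow> real) \<Rightarrow> ('c \<Rightarrow> 'v \<Rightarrow> real) \<Rightarrow> ('v \<Rightarrow> real)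
    \<Rightarrow> 'c set pmf \<Rightarrow> 'c set \<Rightarrow> real" where
  "g_def_fun V p q \<theta> \<sigma> Sd =
     measure_pmf.expectation \<sigma> (\<lambda>Sa. f_inf V p q \<theta> {} Sa - f_inf V p q \<theta> Sd Sa)"

definition monotone_on_subsets :: "'c set \<Rightarrow> ('c set \<Rightarrow> real) \<Rightarrow> bool" where
  "monotone_on_subsets C h \<longleftrightarrow>
     (\<forall>A u. A \<subseteq> C \<and> u \<in> C \<longrightarrow> h (A \<union> {u}) \<ge> h A)"

definition submodular_on_subsets :: "'c set \<Rightarrow> ('c set \<Rightarrow> real) \<Rightarrow> bool" where
  "submodular_on_subsets C h \<longleftrightarrow>
     (\<forall>A B u. A \<subseteq> B \<and> B \<subseteq> C \<and> u \<in> C \<and> u \<notin> B \<longrightarrow>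
        h (B \<union> {u}) - h B \<le> h (A \<union> {u}) - h A)"

end

theory Submission
  imports Defs
begin

lemma prod_le_sub:
  fixes q :: "'c \<Rightarrow> real"
  assumes "finite B" "A \<subseteq> B" "\<And>u. 0 \<le> q u \<and> q u \<le> 1"
  shows "(\<Prod>u\<in>B. 1 - q u) \<le> (\<Prod>u\<in>A. 1 - q u)"
proof -
  have e: "(\<Prod>u\<in>B. 1 - q u) = (\<Prod>u\<in>B - A. 1 - q u) * (\<Prod>u\<in>A. 1 - q u)"
    by (rule prod.subset_diff[OF assms(2,1)])
  have "(\<Prod>u\<in>B - A. 1 - q u) \<le> 1"
    by (rule prod_le_1) (use assms(3) in auto)
  moreover have "0 \<le> (\<Prod>u\<in>A. 1 - q u)"
    by (rule prod_nonneg) (use assms(3) in auto)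
  ultimately have "(\<Prod>u\<in>B - A. 1 - q u) * (\<Prod>u\<in>A. 1 - q u) \<le> 1 * (\<Prod>u\<in>A. 1 - q u)"
    by (rule mult_right_mono)
  then show ?thesis unfolding e by simp
qed

lemma marg:
  assumes "finite B" "u \<notin> B"
  shows "(f_inf V p q \<theta> {} Sa - f_inf V p q \<theta> (B \<union> {u}) Sa)
        - (f_inf V p q \<theta> {} Sa - f_inf V p q \<theta> B Sa)
       = (\<Sum>v\<in>V. \<theta> v * q u v * (\<Prod>w\<in>B. 1 - q w v) * (1 - (\<Prod>w\<in>Sa. 1 - p w v)))"
proof -
  have pr: "(\<Prod>w\<in>B \<union> {u}. 1 - q w v) = (1 - q u v) * (\<Prod>w\<in>B. 1 - q w v)" for v
    using assms by simp
  have "f_inf V p q \<theta> B Sa - f_inf V p q \<theta> (B \<union> {u}) Sa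
     = (\<Sum>v\<in>V. \<theta> v * (\<Prod>w\<in>B. 1 - q w v) * (1 - (\<Prod>w\<in>Sa. 1 - p w v))
          - \<theta> v * (\<Prod>w\<in>B \<union> {u}. 1 - q w v) * (1 - (\<Prod>w\<in>Sa. 1 - p w v)))"
    unfolding f_inf_def by (rule sum_subtractf[symmetric])
  also have "\<dots> = (\<Sum>v\<in>V. \<theta> v * q u v * (\<Prod>w\<in>B. 1 - q w v) * (1 - (\<Prod>w\<in>Sa. 1 - p w v)))"
    unfolding pr by (rule sum.cong) (simp_all add: algebra_simps)
  finally show ?thesis by simp
qed

theorem mainTheorem4:
  fixes V :: "'v set" and C :: "'c set" and p q :: "'c \<Rightarrow> 'v \<Rightarrow> real"
    and \<theta> :: "'v \<Rightarrow> real" and ka :: nat and \<sigma> :: "'c set pmf"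
  assumes "finite V" and "finite C"
    and "\<And>u v. 0 \<le> p u v \<and> p u v \<le> 1"
    and "\<And>u v. 0 \<le> q u v \<and> q u v \<le> 1"
    and "\<And>v. v \<in> V \<Longrightarrow> \<theta> v \<in> {0, 1}"
    and "\<And>S. S \<in> set_pmf \<sigma> \<Longrightarrow> S \<subseteq> C \<and> card S \<le> ka"
  shows "monotone_on_subsets C (g_def_fun V p q \<theta> \<sigma>)
       \<and> submodular_on_subsets C (g_def_fun V p q \<theta> \<sigma>)"
proof -
  let ?D = "\<lambda>Sd Sa. f_inf V p q \<theta> {} Sa - f_inf V p q \<theta> Sd Sa"
  let ?M = "\<lambda>B u Sa. (\<Sum>v\<in>V. \<theta> v * q u v * (\<Prod>w\<in>B. 1 - q w v) * (1 - (\<Prod>w\<in>Sa. 1 - p w v)))"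
  have fin: "finite (set_pmf \<sigma>)"
    by (rule finite_subset[of _ "Pow C"]) (use assms(2,6) in auto)
  have int: "integrable (measure_pmf \<sigma>) h" for h :: "'c set \<Rightarrow> real"
    using fin by (rule integrable_measure_pmf_finite)
  have gdiff: "g_def_fun V p q \<theta> \<sigma> (B \<union> {u}) - g_def_fun V p q \<theta> \<sigma> B
      = measure_pmf.expectation \<sigma> (?M B u)" if "finite B" "u \<notin> B" for B u
  proof -
    have "g_def_fun V p q \<theta> \<sigma> (B \<union> {u}) - g_def_fun V p q \<theta> \<sigma> B
       = measure_pmf.expectation \<sigma> (\<lambda>Sa. ?D (B \<union> {u}) Sa - ?D B Sa)"
      unfolding g_def_fun_def by (rule Bochner_Integration.integral_diff[symmetric]) (rule int)+
    also have "\<dots> = measure_pmf.expectation \<sigma> (?M B u)"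
      using marg[OF that, of V p q \<theta>] by simp
    finally show ?thesis .
  qed
  have th: "0 \<le> \<theta> v" if "v \<in> V" for v using assms(5)[OF that] by auto
  have pS: "0 \<le> 1 - (\<Prod>w\<in>Sa. 1 - p w v)" for Sa v
  proof -
    have "(\<Prod>w\<in>Sa. 1 - p w v) \<le> 1" by (rule prod_le_1) (use assms(3) in auto)
    then show ?thesis by simp
  qed
  have Mnn: "0 \<le> ?M B u Sa" for B u Sa
    by (intro sum_nonneg mult_nonneg_nonneg prod_nonneg th pS) (use assms(4) in auto)
  have mono: "g_def_fun V p q \<theta> \<sigma> A \<le> g_def_fun V p q \<theta> \<sigma> (A \<union> {u})"
    if "A \<subseteq> C" "u \<in> C" for A u
  proof (cases "u \<in> A")
    case True then show ?thesis by (simp add: insert_absorb)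
  next
    case False
    have "finite A" using that assms(2) finite_subset by blast
    have "0 \<le> measure_pmf.expectation \<sigma> (?M A u)"
      by (rule Bochner_Integration.integral_nonneg) (rule Mnn)
    then show ?thesis using gdiff[OF \<open>finite A\<close> False] by simp
  qed
  have sub: "g_def_fun V p q \<theta> \<sigma> (B \<union> {u}) - g_def_fun V p q \<theta> \<sigma> B
        \<le> g_def_fun V p q \<theta> \<sigma> (A \<union> {u}) - g_def_fun V p q \<theta> \<sigma> A"
    if "A \<subseteq> B" "B \<subseteq> C" "u \<in> C" "u \<notin> B" for A B u
  proof -
    have fB: "finite B" using that assms(2) finite_subset by blast
    have fA: "finite A" using that fB finite_subset by blast
    have "?M B u Sa \<le> ?M A u Sa" for Sa
    proof (intro sum_mono)
      fix v assume v: "v \<in> V"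
      have a: "0 \<le> \<theta> v * q u v" using th[OF v] assms(4) by auto
      have b: "(\<Prod>w\<in>B. 1 - q w v) \<le> (\<Prod>w\<in>A. 1 - q w v)"
        using prod_le_sub[OF fB \<open>A \<subseteq> B\<close>, of "\<lambda>w. q w v"] assms(4) by blast
      show "\<theta> v * q u v * (\<Prod>w\<in>B. 1 - q w v) * (1 - (\<Prod>w\<in>Sa. 1 - p w v))
          \<le> \<theta> v * q u v * (\<Prod>w\<in>A. 1 - q w v) * (1 - (\<Prod>w\<in>Sa. 1 - p w v))"
        using a b pS[where Sa=Sa and v=v] by (intro mult_right_mono mult_left_mono) auto
    qed
    then have "measure_pmf.expectation \<sigma> (?M B u) \<le> measure_pmf.expectation \<sigma> (?M A u)"
      by (intro Bochner_Integration.integral_mono int)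
    moreover have uA: "u \<notin> A" using that by auto
    ultimately show ?thesis using gdiff[OF fB \<open>u \<notin> B\<close>] gdiff[OF fA uA] by linarith
  qed
  show ?thesis unfolding monotone_on_subsets_def submodular_on_subsets_def
    using mono sub by blast
qed

end
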